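(* Let $\{(\Gamma_t,\theta_t)\}_{t\in[0,\underline t)}$ solve the framed curvature flow, with $\kappa>0$ so that the torsion is defined. Then $$\frac{d}{dt}\int_{\Gamma_t}\tau\,ds=\frac{d}{dt}\int_{\Gamma_t}\psi_3\,ds=\int_{\Gamma_t}\big(\psi_1\psi_3\kappa+\psi_2\,\partial_s\kappa\big)\,ds .$$
   Context: $S^1=\mathbb{R}/2\pi\mathbb{Z}$; closed curves $\Gamma_t$ parametrized by $\gamma(t,\cdot):S^1\to\mathbb{R}^3$, $g=\|\partial_u\gamma\|$, $ds=g\,du$, $\partial_s=g^{-1}\partial_u$; Frenet frame $T,N,B$, curvature $\kappa$, torsion $\tau$. For an angle function $\theta\in\mathcal C^{1,2}([0,\underline t)\times S^1;S^1)$: $\nu_\theta=\cos\theta N+\sin\theta B$, $\psi_1=\kappa\cos\theta$, $\psi_2=\kappa\sin\theta$, $\psi_3=\tau+\partial_s\theta$. Framed curvature flow: $\partial_t\gamma=\kappa\nu_\theta$, $\partial_t\theta=\upsilon_\theta$ with $\upsilon_\theta\in\mathcal C^1$. *)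

theory Defs
  imports "HOL-Analysis.Analysis"
begin

definition speed :: "(real \<Rightarrow> real^3) \<Rightarrow> real \<Rightarrow> real" where
  "speed c u = norm (vector_derivative c (at u))"

definition sdv :: "(real \<Rightarrow> real^3) \<Rightarrow> (real \<Rightarrow> real^3) \<Rightarrow> real \<Rightarrow> real^3" where
  "sdv c f u = (1 / speed c u) *\<^sub>R vector_derivative f (at u)"

definition sdr :: "(real \<Rightarrow> real^3) \<Rightarrow> (real \<Rightarrow> real) \<Rightarrow> real \<Rightarrow> real" where
  "sdr c f u = deriv f u / speed c u"

definition tangent :: "(real \<Rightarrow> real^3) \<Rightarrow> real \<Rightarrow> real^3" where
  "tangent c = sdv c c"

definition curv :: "(real \<Rightarrow> real^3) \<Rightarrow> real \<Rightarrow> real" where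
  "curv c u = norm (sdv c (tangent c) u)"

definition normal :: "(real \<Rightarrow> real^3) \<Rightarrow> real \<Rightarrow> real^3" where
  "normal c u = (1 / curv c u) *\<^sub>R sdv c (tangent c) u"

definition binormal :: "(real \<Rightarrow> real^3) \<Rightarrow> real \<Rightarrow> real^3" where
  "binormal c u = cross3 (tangent c u) (normal c u)"

text \<open>torsion from the Frenet equation  d_s N = - kappa T + tau B\<close>
definition tors :: "(real \<Rightarrow> real^3) \<Rightarrow> real \<Rightarrow> real" where
  "tors c u = sdv c (normal c) u \<bullet> binormal c u"

text \<open>framed quantities for an angle function th (lifted to real values)\<close>
definition nu_fr :: "(real \<Rightarrow> real^3) \<Rightarrow> (real \<Rightarrow> real) \<Rightarrow> real \<Rightarrow> real^3" where
  "nu_fr c th u = cos (th u) *\<^sub>R normal c u + sin (th u) *\<^sub>R binormal c u"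

definition psi1 :: "(real \<Rightarrow> real^3) \<Rightarrow> (real \<Rightarrow> real) \<Rightarrow> real \<Rightarrow> real" where
  "psi1 c th u = curv c u * cos (th u)"

definition psi2 :: "(real \<Rightarrow> real^3) \<Rightarrow> (real \<Rightarrow> real) \<Rightarrow> real \<Rightarrow> real" where
  "psi2 c th u = curv c u * sin (th u)"

definition psi3 :: "(real \<Rightarrow> real^3) \<Rightarrow> (real \<Rightarrow> real) \<Rightarrow> real \<Rightarrow> real" where
  "psi3 c th u = tors c u + sdr c th u"

definition curve_int :: "(real \<Rightarrow> real^3) \<Rightarrow> (real \<Rightarrow> real) \<Rightarrow> real" where
  "curve_int c f = integral {0..2*pi} (\<lambda>u. f u * speed c u)"

definition pdt :: "real set \<Rightarrow> (real \<Rightarrow> real \<Rightarrow> 'a::real_normed_vector) \<Rightarrow> real \<Rightarrow> real \<Rightarrow> 'a" where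
  "pdt S F t u = vector_derivative (\<lambda>s. F s u) (at t within S)"

definition pdu :: "(real \<Rightarrow> real \<Rightarrow> 'a::real_normed_vector) \<Rightarrow> real \<Rightarrow> real \<Rightarrow> 'a" where
  "pdu F t u = vector_derivative (\<lambda>v. F t v) (at u)"

text \<open>F is continuous on S x R and its partial derivative of order (i,j) exists
  (one-sided at boundary points of S in time) and is continuous, for all i \<le> m, j \<le> n
  (first i time derivatives, then j space derivatives).\<close>
definition Cmn :: "nat \<Rightarrow> nat \<Rightarrow> real set \<Rightarrow> (real \<Rightarrow> real \<Rightarrow> 'a::real_normed_vector) \<Rightarrow> bool" where
  "Cmn m n S F \<longleftrightarrow>
     (\<forall>i\<le>m. \<forall>j\<le>n.
        continuous_on (Sigma S (\<lambda>_. UNIV)) (\<lambda>(t,u). (pdu ^^ j) ((pdt S ^^ i) F) t u) \<and>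
        (\<forall>t\<in>S. \<forall>u. (i < m \<and> j = 0 \<longrightarrow>
            ((\<lambda>s. ((pdt S ^^ i) F) s u) has_vector_derivative (pdt S ^^ Suc i) F t u) (at t within S)) \<and>
          (j < n \<longrightarrow>
            ((\<lambda>v. (pdu ^^ j) ((pdt S ^^ i) F) t v) has_vector_derivative
               (pdu ^^ Suc j) ((pdt S ^^ i) F) t u) (at u))))"

definition smooth_flow :: "real set \<Rightarrow> (real \<Rightarrow> real \<Rightarrow> 'a::real_normed_vector) \<Rightarrow> bool" where
  "smooth_flow S F \<longleftrightarrow> (\<forall>m n. Cmn m n S F)"

end

theory Submission
  imports Defs
begin

lemma bb_cross: "bounded_bilinear (cross3 :: real^3 \<Rightarrow> real^3 \<Rightarrow> real^3)"
  using bilinear_conv_bounded_bilinear bilinear_cross by blast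

lemma vd_mult:
  fixes f g :: "real \<Rightarrow> real"
  shows "(f has_vector_derivative f') (at x within s) \<Longrightarrow> (g has_vector_derivative g') (at x within s) \<Longrightarrow>
    ((\<lambda>x. f x * g x) has_vector_derivative (f' * g x + f x * g')) (at x within s)"
  by (drule (1) has_vector_derivative_mult) (simp add: algebra_simps)

lemma vd_scaleR:
  fixes f :: "real \<Rightarrow> real" and g :: "real \<Rightarrow> 'a::real_normed_vector"
  shows "(f has_vector_derivative f') (at x within s) \<Longrightarrow> (g has_vector_derivative g') (at x within s) \<Longrightarrow>
    ((\<lambda>x. f x *\<^sub>R g x) has_vector_derivative (f' *\<^sub>R g x + f x *\<^sub>R g')) (at x within s)"
  by (drule (1) bounded_bilinear.has_vector_derivative[OF bounded_bilinear_scaleR]) (simp add: algebra_simps)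

lemma vd_inner:
  fixes f g :: "real \<Rightarrow> 'a::real_inner"
  shows "(f has_vector_derivative f') (at x within s) \<Longrightarrow> (g has_vector_derivative g') (at x within s) \<Longrightarrow>
    ((\<lambda>x. f x \<bullet> g x) has_vector_derivative (f' \<bullet> g x + f x \<bullet> g')) (at x within s)"
  by (drule (1) bounded_bilinear.has_vector_derivative[OF bounded_bilinear_inner]) (simp add: algebra_simps)

lemma vd_cross:
  fixes f g :: "real \<Rightarrow> real^3"
  shows "(f has_vector_derivative f') (at x within s) \<Longrightarrow> (g has_vector_derivative g') (at x within s) \<Longrightarrow>
    ((\<lambda>x. cross3 (f x) (g x)) has_vector_derivative (cross3 f' (g x) + cross3 (f x) g')) (at x within s)"
  by (drule (1) bounded_bilinear.has_vector_derivative[OF bb_cross]) (simp add: algebra_simps)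

lemma vd_div1:
  fixes f :: "real \<Rightarrow> real"
  shows "(f has_vector_derivative f') (at x within s) \<Longrightarrow> f x \<noteq> 0 \<Longrightarrow>
    ((\<lambda>x. 1 / f x) has_vector_derivative (- (f' / (f x)^2))) (at x within s)"
  unfolding has_real_derivative_iff_has_vector_derivative[symmetric]
  by (auto intro!: derivative_eq_intros simp: power2_eq_square field_simps)

lemma vd_norm:
  fixes f :: "real \<Rightarrow> 'a::real_inner"
  shows "(f has_vector_derivative f') (at x within s) \<Longrightarrow> f x \<noteq> 0 \<Longrightarrow>
    ((\<lambda>x. norm (f x)) has_vector_derivative ((f x \<bullet> f') / norm (f x))) (at x within s)"
proof -
  assume a: "(f has_vector_derivative f') (at x within s)" "f x \<noteq> 0"
  have "((\<lambda>x. f x \<bullet> f x) has_vector_derivative (f' \<bullet> f x + f x \<bullet> f')) (at x within s)"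
    using vd_inner[OF a(1) a(1)] .
  then have "((\<lambda>x. f x \<bullet> f x) has_real_derivative (2 * (f x \<bullet> f'))) (at x within s)"
    unfolding has_real_derivative_iff_has_vector_derivative by (simp add: inner_commute)
  then have "((\<lambda>x. sqrt (f x \<bullet> f x)) has_real_derivative (inverse (sqrt (f x \<bullet> f x)) / 2 * (2 * (f x \<bullet> f')))) (at x within s)"
    using a(2) by (intro DERIV_real_sqrt[THEN DERIV_chain2]) auto
  then show ?thesis
    unfolding has_real_derivative_iff_has_vector_derivative
    by (simp add: norm_eq_sqrt_inner[symmetric] field_simps)
qed

lemma vd_cos:
  fixes f :: "real \<Rightarrow> real"
  shows "(f has_vector_derivative f') (at x within s) \<Longrightarrow>
    ((\<lambda>x. cos (f x)) has_vector_derivative (- (sin (f x) * f'))) (at x within s)"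
  unfolding has_real_derivative_iff_has_vector_derivative[symmetric]
  by (auto intro!: derivative_eq_intros)

lemma vd_sin:
  fixes f :: "real \<Rightarrow> real"
  shows "(f has_vector_derivative f') (at x within s) \<Longrightarrow>
    ((\<lambda>x. sin (f x)) has_vector_derivative (cos (f x) * f')) (at x within s)"
  unfolding has_real_derivative_iff_has_vector_derivative[symmetric]
  by (auto intro!: derivative_eq_intros)

definition pd :: "bool \<Rightarrow> real \<Rightarrow> (real \<Rightarrow> real \<Rightarrow> 'a::real_normed_vector) \<Rightarrow> (real \<Rightarrow> real \<Rightarrow> 'a) \<Rightarrow> bool" where
  "pd d b F D \<longleftrightarrow> continuous_on ({0..<b} \<times> UNIV) (\<lambda>p. F (fst p) (snd p)) \<and>
     continuous_on ({0..<b} \<times> UNIV) (\<lambda>p. D (fst p) (snd p)) \<and>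
     (\<forall>t\<in>{0..<b}. \<forall>u. (if d then ((\<lambda>s. F s u) has_vector_derivative D t u) (at t within {0..<b})
                          else ((\<lambda>v. F t v) has_vector_derivative D t u) (at u)))"

lemma pdD:
  assumes "pd d b F D"
  shows "continuous_on ({0..<b} \<times> UNIV) (\<lambda>p. F (fst p) (snd p))"
    "continuous_on ({0..<b} \<times> UNIV) (\<lambda>p. D (fst p) (snd p))"
    "d \<Longrightarrow> t \<in> {0..<b} \<Longrightarrow> ((\<lambda>s. F s u) has_vector_derivative D t u) (at t within {0..<b})"
    "\<not> d \<Longrightarrow> t \<in> {0..<b} \<Longrightarrow> ((\<lambda>v. F t v) has_vector_derivative D t u) (at u)"
  using assms unfolding pd_def by auto

lemma pdI:
  assumes "continuous_on ({0..<b} \<times> UNIV) (\<lambda>p. F (fst p) (snd p))"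
    "continuous_on ({0..<b} \<times> UNIV) (\<lambda>p. D (fst p) (snd p))"
    "\<And>t u. d \<Longrightarrow> t \<in> {0..<b} \<Longrightarrow> ((\<lambda>s. F s u) has_vector_derivative D t u) (at t within {0..<b})"
    "\<And>t u. \<not> d \<Longrightarrow> t \<in> {0..<b} \<Longrightarrow> ((\<lambda>v. F t v) has_vector_derivative D t u) (at u)"
  shows "pd d b F D"
  using assms unfolding pd_def by auto

lemma pd_const: "pd d b (\<lambda>t u. c) (\<lambda>t u. 0)"
  by (rule pdI) (auto intro!: continuous_intros derivative_eq_intros)

lemma pd_add: "pd d b F Fd \<Longrightarrow> pd d b G Gd \<Longrightarrow> pd d b (\<lambda>t u. F t u + G t u) (\<lambda>t u. Fd t u + Gd t u)"
  apply (rule pdI)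
  apply (auto intro!: continuous_intros has_vector_derivative_add dest: pdD)
  done

lemma pd_diff: "pd d b F Fd \<Longrightarrow> pd d b G Gd \<Longrightarrow> pd d b (\<lambda>t u. F t u - G t u) (\<lambda>t u. Fd t u - Gd t u)"
  apply (rule pdI)
  apply (auto intro!: continuous_intros has_vector_derivative_diff dest: pdD)
  done

lemma pd_mult:
  fixes F G :: "real \<Rightarrow> real \<Rightarrow> real"
  shows "pd d b F Fd \<Longrightarrow> pd d b G Gd \<Longrightarrow> pd d b (\<lambda>t u. F t u * G t u) (\<lambda>t u. Fd t u * G t u + F t u * Gd t u)"
  apply (rule pdI)
  apply (auto intro!: continuous_intros vd_mult dest: pdD)
  done

lemma pd_scaleR:
  fixes F :: "real \<Rightarrow> real \<Rightarrow> real"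
  shows "pd d b F Fd \<Longrightarrow> pd d b G Gd \<Longrightarrow> pd d b (\<lambda>t u. F t u *\<^sub>R G t u) (\<lambda>t u. Fd t u *\<^sub>R G t u + F t u *\<^sub>R Gd t u)"
  apply (rule pdI)
  apply (auto intro!: continuous_intros vd_scaleR dest: pdD)
  done

lemma pd_inner:
  fixes F G :: "real \<Rightarrow> real \<Rightarrow> 'a::real_inner"
  shows "pd d b F Fd \<Longrightarrow> pd d b G Gd \<Longrightarrow> pd d b (\<lambda>t u. F t u \<bullet> G t u) (\<lambda>t u. Fd t u \<bullet> G t u + F t u \<bullet> Gd t u)"
  apply (rule pdI)
  apply (auto intro!: continuous_intros vd_inner dest: pdD)
  done

lemma pd_cross:
  fixes F G :: "real \<Rightarrow> real \<Rightarrow> real^3"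
  shows "pd d b F Fd \<Longrightarrow> pd d b G Gd \<Longrightarrow> pd d b (\<lambda>t u. cross3 (F t u) (G t u)) (\<lambda>t u. cross3 (Fd t u) (G t u) + cross3 (F t u) (Gd t u))"
  apply (rule pdI)
  apply (auto intro!: continuous_intros continuous_on_cross vd_cross dest: pdD)
  done

lemma pd_div1:
  fixes F :: "real \<Rightarrow> real \<Rightarrow> real"
  shows "pd d b F Fd \<Longrightarrow> (\<And>t u. t \<in> {0..<b} \<Longrightarrow> F t u \<noteq> 0) \<Longrightarrow>
     pd d b (\<lambda>t u. 1 / F t u) (\<lambda>t u. - (Fd t u / (F t u)^2))"
  apply (rule pdI)
  apply (auto intro!: continuous_intros vd_div1 dest: pdD)
  done

lemma pd_norm:
  fixes F :: "real \<Rightarrow> real \<Rightarrow> 'a::real_inner"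
  shows "pd d b F Fd \<Longrightarrow> (\<And>t u. t \<in> {0..<b} \<Longrightarrow> F t u \<noteq> 0) \<Longrightarrow>
     pd d b (\<lambda>t u. norm (F t u)) (\<lambda>t u. (F t u \<bullet> Fd t u) / norm (F t u))"
  apply (rule pdI)
  apply (auto intro!: continuous_intros vd_norm dest: pdD)
  done

lemma pd_cos:
  fixes F :: "real \<Rightarrow> real \<Rightarrow> real"
  shows "pd d b F Fd \<Longrightarrow> pd d b (\<lambda>t u. cos (F t u)) (\<lambda>t u. - (sin (F t u) * Fd t u))"
  apply (rule pdI)
  apply (auto intro!: continuous_intros vd_cos dest: pdD)
  done

lemma pd_sin:
  fixes F :: "real \<Rightarrow> real \<Rightarrow> real"
  shows "pd d b F Fd \<Longrightarrow> pd d b (\<lambda>t u. sin (F t u)) (\<lambda>t u. cos (F t u) * Fd t u)"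
  apply (rule pdI)
  apply (auto intro!: continuous_intros vd_sin dest: pdD)
  done


lemma nontriv_S: "t \<in> {0..<b} \<Longrightarrow> at t within {0..<b} \<noteq> (bot :: real filter)"
proof -
  assume t: "t \<in> {0..<b}"
  have "t islimpt {t<..<b}" using t by (intro islimpt_greaterThanLessThan1) auto
  then have "t islimpt {0..<b}" by (rule islimpt_subset) (use t in auto)
  then show ?thesis by (simp add: trivial_limit_within)
qed

lemma cont_slice_t:
  assumes "continuous_on ({0..<b} \<times> UNIV) (\<lambda>p. F (fst p) (snd p))" "A \<subseteq> {0..<b}"
  shows "continuous_on A (\<lambda>r. F r v)"
proof -
  have "continuous_on A ((\<lambda>p. F (fst p) (snd p)) \<circ> (\<lambda>r. (r, v)))"
    by (rule continuous_on_compose) (use assms in \<open>auto intro!: continuous_intros continuous_on_subset[OF assms(1)] dest: subsetD[OF assms(2)]\<close>)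
  then show ?thesis by (simp add: o_def)
qed

lemma cont_slice_u:
  assumes "continuous_on ({0..<b} \<times> UNIV) (\<lambda>p. F (fst p) (snd p))" "t \<in> {0..<b}"
  shows "continuous_on A (\<lambda>v. F t v)"
proof -
  have "continuous_on A ((\<lambda>p. F (fst p) (snd p)) \<circ> (\<lambda>v. (t, v)))"
    by (rule continuous_on_compose) (use assms in \<open>auto intro!: continuous_intros continuous_on_subset[OF assms(1)]\<close>)
  then show ?thesis by (simp add: o_def)
qed

lemma cont_swap:
  assumes "continuous_on ({0..<b} \<times> UNIV) (\<lambda>p. F (fst p) (snd p))" "A \<subseteq> {0..<b}"
  shows "continuous_on (UNIV \<times> A) (\<lambda>(v, r). F r v)"
proof -
  have "continuous_on (UNIV \<times> A) ((\<lambda>p. F (fst p) (snd p)) \<circ> (\<lambda>p. (snd p, fst p)))"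
    by (rule continuous_on_compose) (use assms in \<open>auto intro!: continuous_intros continuous_on_subset[OF assms(1)] dest: subsetD[OF assms(2)]\<close>)
  then show ?thesis by (simp add: o_def case_prod_beta)
qed


lemma deriv_within_S_transfer:
  assumes "(f has_vector_derivative f') (at t within {0..c})" "t \<in> {0..<b}" "t < c" "c < b"
  shows "(f has_vector_derivative f') (at t within {0..<b})"
proof -
  have "at t within {0..c} = at t within {0..<b}"
    by (rule at_within_nhd[where S="{..<c}"]) (use assms in auto)
  then show ?thesis using assms(1) by simp
qed

lemma schwarzA:
  fixes F :: "real \<Rightarrow> real \<Rightarrow> 'a::banach"
  assumes Ft: "pd True b F Ft" and Fu: "pd False b F Fu" and Ftu: "pd False b Ft Ftu"
  shows "pd True b Fu Ftu"
proof (rule pdI)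
  show "continuous_on ({0..<b} \<times> UNIV) (\<lambda>p. Fu (fst p) (snd p))" using pdD(2)[OF Fu] .
  show "continuous_on ({0..<b} \<times> UNIV) (\<lambda>p. Ftu (fst p) (snd p))" using pdD(2)[OF Ftu] .
  fix t u assume t: "t \<in> {0..<b}"
  have rep: "Fu s u = Fu 0 u + integral {0..s} (\<lambda>r. Ftu r u)" if s: "s \<in> {0..<b}" for s
  proof -
    have I: "integral {0..s} (\<lambda>r. Ft r v) = F s v - F 0 v" for v
    proof -
      have D: "((\<lambda>r. F r v) has_vector_derivative Ft x v) (at x within {0..s})" if x: "x \<in> {0..s}" for x
      proof -
        have "x \<in> {0..<b}" using s x by auto
        from pdD(3)[OF Ft _ this] show ?thesis
          by (rule has_vector_derivative_within_subset) (use s in auto)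
      qed
      have "((\<lambda>r. Ft r v) has_integral (F s v - F 0 v)) {0..s}"
        using fundamental_theorem_of_calculus[of 0 s "\<lambda>r. F r v" "\<lambda>r. Ft r v"] D s by auto
      then show ?thesis by (simp add: integral_unique)
    qed
    have L: "((\<lambda>v. integral (cbox 0 s) (\<lambda>r. Ft r v)) has_vector_derivative integral (cbox 0 s) (\<lambda>r. Ftu r u)) (at u within UNIV)"
    proof (rule leibniz_rule_vector_derivative[where f="\<lambda>v r. Ft r v" and fx="\<lambda>v r. Ftu r v"])
      fix v r assume "r \<in> cbox 0 s"
      then have "r \<in> {0..<b}" using s by auto
      then show "((\<lambda>v. Ft r v) has_vector_derivative Ftu r v) (at v within UNIV)"
        using pdD(4)[OF Ftu] by auto
    next
      fix v
      have "continuous_on {0..s} (\<lambda>r. Ft r v)"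
        by (rule cont_slice_t[OF pdD(2)[OF Ft]]) (use s in auto)
      then show "(\<lambda>r. Ft r v) integrable_on cbox 0 s" by (simp add: integrable_continuous_interval)
    next
      show "continuous_on (UNIV \<times> cbox 0 s) (\<lambda>(v, r). Ftu r v)"
        by (rule cont_swap[OF pdD(2)[OF Ftu]]) (use s in auto)
    qed auto
    have F0: "((\<lambda>v. F 0 v) has_vector_derivative Fu 0 u) (at u)"
      using pdD(4)[OF Fu, of 0 u] s by auto
    have L2: "((\<lambda>v. F 0 v + integral {0..s} (\<lambda>r. Ft r v)) has_vector_derivative (Fu 0 u + integral {0..s} (\<lambda>r. Ftu r u))) (at u)"
      using has_vector_derivative_add[OF F0 L] by (simp add: cbox_interval)
    have L3: "(\<lambda>v. F 0 v + integral {0..s} (\<lambda>r. Ft r v)) = (\<lambda>v. F s v)"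
      using I by auto
    have L4: "((\<lambda>v. F s v) has_vector_derivative Fu s u) (at u)" using pdD(4)[OF Fu _ s] by auto
    show ?thesis
      using vector_derivative_unique_within[OF _ L4 L2[unfolded L3]] by simp
  qed
  define c where "c = (t + b) / 2"
  have c: "t < c" "c < b" using t by (auto simp: c_def)
  have "((\<lambda>s. integral {0..s} (\<lambda>r. Ftu r u)) has_vector_derivative Ftu t u) (at t within {0..c})"
    by (rule integral_has_vector_derivative) (use t c in \<open>auto intro!: cont_slice_t[OF pdD(2)[OF Ftu]]\<close>)
  then have "((\<lambda>s. integral {0..s} (\<lambda>r. Ftu r u)) has_vector_derivative Ftu t u) (at t within {0..<b})"
    by (rule deriv_within_S_transfer) (use t c in auto)
  then have "((\<lambda>s. Fu 0 u + integral {0..s} (\<lambda>r. Ftu r u)) has_vector_derivative Ftu t u) (at t within {0..<b})"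
    by (rule has_vector_derivative_add[OF has_vector_derivative_const, simplified])
  then show "((\<lambda>s. Fu s u) has_vector_derivative Ftu t u) (at t within {0..<b})"
    by (rule has_vector_derivative_transform_within[where d=1]) (use t in \<open>auto intro: rep[symmetric]\<close>)
qed simp


lemma schwarzB:
  fixes F :: "real \<Rightarrow> real \<Rightarrow> 'a::banach"
  assumes Fu: "pd False b F Fu" and Ft: "pd True b F Ft" and Fut: "pd True b Fu Fut"
  shows "pd False b Ft Fut"
proof (rule pdI)
  show "continuous_on ({0..<b} \<times> UNIV) (\<lambda>p. Ft (fst p) (snd p))" using pdD(2)[OF Ft] .
  show "continuous_on ({0..<b} \<times> UNIV) (\<lambda>p. Fut (fst p) (snd p))" using pdD(2)[OF Fut] .
  fix t u :: real assume t: "t \<in> {0..<b}"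
  define a where "a = u - 1"
  have rep: "Ft t v = Ft t a + integral {a..v} (\<lambda>w. Fut t w)" if v: "a \<le> v" for v
  proof -
    have I: "F s v = F s a + integral {a..v} (\<lambda>w. Fu s w)" if s: "s \<in> {0..<b}" for s
    proof -
      have D: "((\<lambda>w. F s w) has_vector_derivative Fu s x) (at x within {a..v})" for x
        using pdD(4)[OF Fu _ s] by (auto intro: has_vector_derivative_at_within)
      have "((\<lambda>w. Fu s w) has_integral (F s v - F s a)) {a..v}"
        using fundamental_theorem_of_calculus[of a v "\<lambda>w. F s w" "\<lambda>w. Fu s w"] D v by auto
      then show ?thesis by (simp add: integral_unique)
    qed
    have L: "((\<lambda>s. integral (cbox a v) (\<lambda>w. Fu s w)) has_vector_derivative integral (cbox a v) (\<lambda>w. Fut t w)) (at t within {0..<b})"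
    proof (rule leibniz_rule_vector_derivative[where f="\<lambda>s w. Fu s w" and fx="\<lambda>s w. Fut s w"])
      fix s w assume "s \<in> {0..<b}"
      then show "((\<lambda>s. Fu s w) has_vector_derivative Fut s w) (at s within {0..<b})"
        using pdD(3)[OF Fut] by auto
    next
      fix s assume s: "s \<in> {0..<b}"
      have "continuous_on {a..v} (\<lambda>w. Fu s w)"
        by (rule cont_slice_u[OF pdD(2)[OF Fu] s])
      then show "(\<lambda>w. Fu s w) integrable_on cbox a v" by (simp add: integrable_continuous_interval)
    next
      show "continuous_on ({0..<b} \<times> cbox a v) (\<lambda>(s, w). Fut s w)"
        using continuous_on_subset[OF pdD(2)[OF Fut], of "{0..<b} \<times> {a..v}"] by (auto simp: case_prod_beta cbox_interval)
    qed (use t in auto)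
    have Fa: "((\<lambda>s. F s a) has_vector_derivative Ft t a) (at t within {0..<b})"
      using pdD(3)[OF Ft TrueI t] by auto
    have L2: "((\<lambda>s. F s a + integral {a..v} (\<lambda>w. Fu s w)) has_vector_derivative (Ft t a + integral {a..v} (\<lambda>w. Fut t w))) (at t within {0..<b})"
      using has_vector_derivative_add[OF Fa L] by (simp add: cbox_interval)
    have L3: "((\<lambda>s. F s v) has_vector_derivative (Ft t a + integral {a..v} (\<lambda>w. Fut t w))) (at t within {0..<b})"
      by (rule has_vector_derivative_transform_within[OF L2, where d=1]) (use t in \<open>auto intro: I[symmetric]\<close>)
    have L4: "((\<lambda>s. F s v) has_vector_derivative Ft t v) (at t within {0..<b})" using pdD(3)[OF Ft TrueI t] by auto
    show ?thesis
      using vector_derivative_unique_within[OF nontriv_S[OF t] L4 L3] .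
  qed
  have "((\<lambda>v. integral {a..v} (\<lambda>w. Fut t w)) has_vector_derivative Fut t u) (at u within {a..u+1})"
    by (rule integral_has_vector_derivative) (use t in \<open>auto intro!: cont_slice_u[OF pdD(2)[OF Fut]] simp: a_def\<close>)
  moreover have "at u within {a..u+1} = at u"
    by (rule at_within_interior) (simp add: a_def)
  ultimately have "((\<lambda>v. integral {a..v} (\<lambda>w. Fut t w)) has_vector_derivative Fut t u) (at u)" by simp
  then have "((\<lambda>v. Ft t a + integral {a..v} (\<lambda>w. Fut t w)) has_vector_derivative Fut t u) (at u)"
    by (rule has_vector_derivative_add[OF has_vector_derivative_const, simplified])
  then show "((\<lambda>v. Ft t v) has_vector_derivative Fut t u) (at u)"
  proof (rule has_vector_derivative_transform_within_open[where S="{a<..}"])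
    show "u \<in> {a<..}" by (simp add: a_def)
    fix y assume "y \<in> {a<..}"
    then show "Ft t a + integral {a..y} (\<lambda>w. Fut t w) = Ft t y" using rep[of y] by simp
  qed simp
qed simp


lemma pd_cong:
  assumes "pd d b F D" "\<And>t u. t \<in> {0..<b} \<Longrightarrow> F t u = G t u" "\<And>t u. t \<in> {0..<b} \<Longrightarrow> D t u = D' t u"
  shows "pd d b G D'"
proof (rule pdI)
  have "continuous_on ({0..<b} \<times> UNIV) (\<lambda>p. G (fst p) (snd p)) = continuous_on ({0..<b} \<times> UNIV) (\<lambda>p. F (fst p) (snd p))"
    by (rule continuous_on_cong) (auto simp: assms(2) mem_Times_iff)
  then show "continuous_on ({0..<b} \<times> UNIV) (\<lambda>p. G (fst p) (snd p))" using pdD(1)[OF assms(1)] by simp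
  have "continuous_on ({0..<b} \<times> UNIV) (\<lambda>p. D' (fst p) (snd p)) = continuous_on ({0..<b} \<times> UNIV) (\<lambda>p. D (fst p) (snd p))"
    by (rule continuous_on_cong) (auto simp: assms(3) mem_Times_iff)
  then show "continuous_on ({0..<b} \<times> UNIV) (\<lambda>p. D' (fst p) (snd p))" using pdD(2)[OF assms(1)] by simp
  fix t u assume t: "t \<in> {0..<b}"
  show "((\<lambda>s. G s u) has_vector_derivative D' t u) (at t within {0..<b})" if d
  proof -
    have "((\<lambda>s. F s u) has_vector_derivative D' t u) (at t within {0..<b})"
      using pdD(3)[OF assms(1) that t, of u] assms(3)[OF t] by simp
    then show ?thesis
      by (rule has_vector_derivative_transform_within[where d=1]) (use t assms(2) in auto)
  qed
  show "((\<lambda>v. G t v) has_vector_derivative D' t u) (at u)" if "\<not> d"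
  proof -
    have e: "(\<lambda>v. G t v) = (\<lambda>v. F t v)" using assms(2)[OF t] by auto
    show ?thesis unfolding e using pdD(4)[OF assms(1) that t, of u] assms(3)[OF t] by simp
  qed
qed

inductive goodR :: "real \<Rightarrow> (real \<Rightarrow> real \<Rightarrow> real^3) \<Rightarrow> (real \<Rightarrow> real \<Rightarrow> real) \<Rightarrow> bool"
  and goodV :: "real \<Rightarrow> (real \<Rightarrow> real \<Rightarrow> real^3) \<Rightarrow> (real \<Rightarrow> real \<Rightarrow> real^3) \<Rightarrow> bool"
  for b gam where
  gX: "goodV b gam ((pdu ^^ j) gam)"
| rconst: "goodR b gam (\<lambda>t u. c)"
| radd: "goodR b gam F \<Longrightarrow> goodR b gam G \<Longrightarrow> goodR b gam (\<lambda>t u. F t u + G t u)"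
| rdiff: "goodR b gam F \<Longrightarrow> goodR b gam G \<Longrightarrow> goodR b gam (\<lambda>t u. F t u - G t u)"
| rmult: "goodR b gam F \<Longrightarrow> goodR b gam G \<Longrightarrow> goodR b gam (\<lambda>t u. F t u * G t u)"
| rdiv1: "goodR b gam F \<Longrightarrow> (\<And>t u. t \<in> {0..<b} \<Longrightarrow> F t u \<noteq> 0) \<Longrightarrow> goodR b gam (\<lambda>t u. 1 / F t u)"
| rinner: "goodV b gam F \<Longrightarrow> goodV b gam G \<Longrightarrow> goodR b gam (\<lambda>t u. F t u \<bullet> G t u)"
| rnorm: "goodV b gam F \<Longrightarrow> (\<And>t u. t \<in> {0..<b} \<Longrightarrow> F t u \<noteq> 0) \<Longrightarrow> goodR b gam (\<lambda>t u. norm (F t u))"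
| rcong: "goodR b gam F \<Longrightarrow> (\<And>t u. t \<in> {0..<b} \<Longrightarrow> F t u = G t u) \<Longrightarrow> goodR b gam G"
| vadd: "goodV b gam F \<Longrightarrow> goodV b gam G \<Longrightarrow> goodV b gam (\<lambda>t u. F t u + G t u)"
| vdiff: "goodV b gam F \<Longrightarrow> goodV b gam G \<Longrightarrow> goodV b gam (\<lambda>t u. F t u - G t u)"
| vscale: "goodR b gam F \<Longrightarrow> goodV b gam G \<Longrightarrow> goodV b gam (\<lambda>t u. F t u *\<^sub>R G t u)"
| vcross: "goodV b gam F \<Longrightarrow> goodV b gam G \<Longrightarrow> goodV b gam (\<lambda>t u. cross3 (F t u) (G t u))"
| vcong: "goodV b gam F \<Longrightarrow> (\<And>t u. t \<in> {0..<b} \<Longrightarrow> F t u = G t u) \<Longrightarrow> goodV b gam G"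

lemmas good_intros = goodR_goodV.gX goodR_goodV.rconst goodR_goodV.radd goodR_goodV.rdiff goodR_goodV.rmult goodR_goodV.rdiv1 goodR_goodV.rinner goodR_goodV.rnorm goodR_goodV.vadd goodR_goodV.vdiff goodR_goodV.vscale goodR_goodV.vcross

lemma good_u:
  assumes gu: "\<And>j. pd False b ((pdu ^^ j) gam) ((pdu ^^ Suc j) gam)"
  shows "goodR b gam F \<Longrightarrow> \<exists>D. goodR b gam D \<and> pd False b F D"
    and "goodV b gam G \<Longrightarrow> \<exists>D. goodV b gam D \<and> pd False b G D"
proof (induction rule: goodR_goodV.inducts)
  case (gX j)
  show ?case using gu[of j] goodR_goodV.gX[of b gam "Suc j"] by blast
next
  case (rconst c)
  show ?case using pd_const goodR_goodV.rconst by blast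
next
  case (radd F G)
  then obtain D1 D2 where "goodR b gam D1" "pd False b F D1" "goodR b gam D2" "pd False b G D2" by blast
  then show ?case using pd_add goodR_goodV.radd by blast
next
  case (rdiff F G)
  then obtain D1 D2 where "goodR b gam D1" "pd False b F D1" "goodR b gam D2" "pd False b G D2" by blast
  then show ?case using pd_diff goodR_goodV.rdiff by blast
next
  case (rmult F G)
  then obtain D1 D2 where D: "goodR b gam D1" "pd False b F D1" "goodR b gam D2" "pd False b G D2" by blast
  have "goodR b gam (\<lambda>t u. D1 t u * G t u + F t u * D2 t u)"
    by (intro good_intros D rmult)
  then show ?case using pd_mult[OF D(2) D(4)] by blast
next
  case (rdiv1 F)
  then obtain D where D: "goodR b gam D" "pd False b F D" by blast
  have "goodR b gam (\<lambda>t u. (0 - D t u) * ((1 / F t u) * (1 / F t u)))"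
    by (intro good_intros D rdiv1)
  then have "goodR b gam (\<lambda>t u. - (D t u / (F t u)^2))"
    by (rule goodR_goodV.rcong) (simp add: power2_eq_square)
  then show ?case using pd_div1[OF D(2) rdiv1(3)] by blast
next
  case (rinner F G)
  then obtain D1 D2 where D: "goodV b gam D1" "pd False b F D1" "goodV b gam D2" "pd False b G D2" by blast
  have "goodR b gam (\<lambda>t u. D1 t u \<bullet> G t u + F t u \<bullet> D2 t u)"
    by (intro good_intros D rinner)
  then show ?case using pd_inner[OF D(2) D(4)] by blast
next
  case (rnorm F)
  then obtain D where D: "goodV b gam D" "pd False b F D" by blast
  have "goodR b gam (\<lambda>t u. (F t u \<bullet> D t u) * (1 / norm (F t u)))"
    by (intro good_intros D rnorm) (use rnorm(3) in auto)
  then have "goodR b gam (\<lambda>t u. (F t u \<bullet> D t u) / norm (F t u))"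
    by (rule goodR_goodV.rcong) simp
  then show ?case using pd_norm[OF D(2) rnorm(3)] by blast
next
  case (rcong F G)
  then obtain D where D: "goodR b gam D" "pd False b F D" by blast
  have "pd False b G D" by (rule pd_cong[OF D(2)]) (use rcong in auto)
  then show ?case using D(1) by blast
next
  case (vadd F G)
  then obtain D1 D2 where "goodV b gam D1" "pd False b F D1" "goodV b gam D2" "pd False b G D2" by blast
  then show ?case using pd_add goodR_goodV.vadd by blast
next
  case (vdiff F G)
  then obtain D1 D2 where "goodV b gam D1" "pd False b F D1" "goodV b gam D2" "pd False b G D2" by blast
  then show ?case using pd_diff goodR_goodV.vdiff by blast
next
  case (vscale F G)
  then obtain D1 D2 where D: "goodR b gam D1" "pd False b F D1" "goodV b gam D2" "pd False b G D2" by blast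
  have "goodV b gam (\<lambda>t u. D1 t u *\<^sub>R G t u + F t u *\<^sub>R D2 t u)"
    by (intro good_intros D vscale)
  then show ?case using pd_scaleR[OF D(2) D(4)] by blast
next
  case (vcross F G)
  then obtain D1 D2 where D: "goodV b gam D1" "pd False b F D1" "goodV b gam D2" "pd False b G D2" by blast
  have "goodV b gam (\<lambda>t u. cross3 (D1 t u) (G t u) + cross3 (F t u) (D2 t u))"
    by (intro good_intros D vcross)
  then show ?case using pd_cross[OF D(2) D(4)] by blast
next
  case (vcong F G)
  then obtain D where D: "goodV b gam D" "pd False b F D" by blast
  have "pd False b G D" by (rule pd_cong[OF D(2)]) (use vcong in auto)
  then show ?case using D(1) by blast
qed

lemma good_t:
  assumes gt: "\<And>j. \<exists>D. pd True b ((pdu ^^ j) gam) D"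
  shows "goodR b gam F \<Longrightarrow> \<exists>D. pd True b F D"
    and "goodV b gam G \<Longrightarrow> \<exists>D. pd True b G D"
proof (induction rule: goodR_goodV.inducts)
  case (gX j) then show ?case using gt by blast
next
  case (rconst c) then show ?case using pd_const by blast
next
  case (radd F G) then show ?case using pd_add by blast
next
  case (rdiff F G) then show ?case using pd_diff by blast
next
  case (rmult F G) then show ?case using pd_mult by blast
next
  case (rdiv1 F) then show ?case using pd_div1 by blast
next
  case (rinner F G) then show ?case using pd_inner by blast
next
  case (rnorm F) then show ?case using pd_norm by blast
next
  case (rcong F G) then show ?case using pd_cong by blast
next
  case (vadd F G) then show ?case using pd_add by blast
next
  case (vdiff F G) then show ?case using pd_diff by blast
next
  case (vscale F G) then show ?case using pd_scaleR by blast
next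
  case (vcross F G) then show ?case using pd_cross by blast
next
  case (vcong F G) then show ?case using pd_cong by blast
qed

lemma good_per:
  assumes gp: "\<forall>t\<in>{0..<b}. \<forall>j u. (pdu ^^ j) gam t (u + 2*pi) = (pdu ^^ j) gam t u"
  shows "goodR b gam F \<Longrightarrow> t \<in> {0..<b} \<Longrightarrow> F t (u + 2*pi) = F t u"
    and "goodV b gam G \<Longrightarrow> t \<in> {0..<b} \<Longrightarrow> G t (u + 2*pi) = G t u"
proof (induction arbitrary: u and u rule: goodR_goodV.inducts)
  case (gX j) then show ?case using gp by blast
next
  case (rconst c) then show ?case by simp
next
  case (radd F G) then show ?case by simp
next
  case (rdiff F G) then show ?case by simp
next
  case (rmult F G) then show ?case by simp
next
  case (rdiv1 F) then show ?case by simp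
next
  case (rinner F G) then show ?case by simp
next
  case (rnorm F) then show ?case by simp
next
  case (rcong F G)
  have "G t (u+2*pi) = F t (u+2*pi)" using rcong(3)[OF rcong(4)] by simp
  also have "\<dots> = F t u" using rcong(2)[OF rcong(4)] .
  also have "\<dots> = G t u" using rcong(3)[OF rcong(4)] by simp
  finally show ?case .
next
  case (vadd F G) then show ?case by simp
next
  case (vdiff F G) then show ?case by simp
next
  case (vscale F G) then show ?case by simp
next
  case (vcross F G) then show ?case by simp
next
  case (vcong F G)
  have "G t (u+2*pi) = F t (u+2*pi)" using vcong(3)[OF vcong(4)] by simp
  also have "\<dots> = F t u" using vcong(2)[OF vcong(4)] .
  also have "\<dots> = G t u" using vcong(3)[OF vcong(4)] by simp
  finally show ?case .
qed


lemma uniq_u: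
  fixes f :: "real \<Rightarrow> 'a::real_normed_vector"
  shows "(f has_vector_derivative D1) (at u) \<Longrightarrow> (g has_vector_derivative D2) (at u) \<Longrightarrow> (\<And>v. f v = g v) \<Longrightarrow> D1 = D2"
proof -
  assume a: "(f has_vector_derivative D1) (at u)" "(g has_vector_derivative D2) (at u)" "\<And>v. f v = g v"
  then have "f = g" by auto
  with a show ?thesis using vector_derivative_unique_within[of u UNIV f D1 D2] by simp
qed

lemma uniq_t:
  fixes f :: "real \<Rightarrow> 'a::real_normed_vector"
  shows "t \<in> {0..<b} \<Longrightarrow> (f has_vector_derivative D1) (at t within {0..<b}) \<Longrightarrow> (g has_vector_derivative D2) (at t within {0..<b}) \<Longrightarrow> (\<And>s. s \<in> {0..<b} \<Longrightarrow> f s = g s) \<Longrightarrow> D1 = D2"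
proof -
  assume a: "t \<in> {0..<b}" "(f has_vector_derivative D1) (at t within {0..<b})" "(g has_vector_derivative D2) (at t within {0..<b})"
    "\<And>s. s \<in> {0..<b} \<Longrightarrow> f s = g s"
  have "(g has_vector_derivative D1) (at t within {0..<b})"
    by (rule has_vector_derivative_transform_within[OF a(2), where d=1]) (use a in auto)
  then show ?thesis using vector_derivative_unique_within[OF nontriv_S[OF a(1)] _ a(3)] by simp
qed

lemma const_u:
  fixes f :: "real \<Rightarrow> 'a::real_normed_vector"
  shows "(f has_vector_derivative D) (at u) \<Longrightarrow> (\<And>v. f v = c) \<Longrightarrow> D = 0"
  using uniq_u[of f D u "\<lambda>_. c" 0] by (auto intro: has_vector_derivative_const)

lemma const_t:
  fixes f :: "real \<Rightarrow> 'a::real_normed_vector"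
  shows "t \<in> {0..<b} \<Longrightarrow> (f has_vector_derivative D) (at t within {0..<b}) \<Longrightarrow> (\<And>s. s \<in> {0..<b} \<Longrightarrow> f s = c) \<Longrightarrow> D = 0"
  using uniq_t[of t b f D "\<lambda>_. c" 0] by (auto intro: has_vector_derivative_const)

lemma onb3:
  fixes T N x y :: "real^3"
  assumes TT: "T \<bullet> T = 1" and NN: "N \<bullet> N = 1" and TN: "T \<bullet> N = 0"
  shows "x \<bullet> y = (x \<bullet> T) * (y \<bullet> T) + (x \<bullet> N) * (y \<bullet> N) + (x \<bullet> cross3 T N) * (y \<bullet> cross3 T N)"
proof -
  define B where "B = cross3 T N"
  have BT: "B \<bullet> T = 0" and BN: "B \<bullet> N = 0" unfolding B_def by (simp_all add: dot_cross_self)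
  have BB: "B \<bullet> B = 1" unfolding B_def dot_cross using TT NN TN by (simp add: inner_commute)
  define w where "w = x - (x \<bullet> T) *\<^sub>R T - (x \<bullet> N) *\<^sub>R N - (x \<bullet> B) *\<^sub>R B"
  have NT: "N \<bullet> T = 0" and TB: "T \<bullet> B = 0" and NB: "N \<bullet> B = 0" using TN BT BN by (simp_all add: inner_commute)
  have wT: "w \<bullet> T = 0" unfolding w_def using TT NT BT by (simp add: inner_diff_left)
  have wN: "w \<bullet> N = 0" unfolding w_def using NN TN BN by (simp add: inner_diff_left)
  have wB: "w \<bullet> B = 0" unfolding w_def using BB TB NB by (simp add: inner_diff_left)
  have "cross3 B w = 0"
  proof -
    have "cross3 B w = - cross3 w (cross3 T N)" unfolding B_def by (metis cross_skew)
    also have "\<dots> = - ((w \<bullet> N) *\<^sub>R T - (w \<bullet> T) *\<^sub>R N)" by (simp add: Lagrange)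
    also have "\<dots> = 0" using wT wN by simp
    finally show ?thesis .
  qed
  then have "0 = cross3 B (cross3 B w)" by simp
  also have "\<dots> = (B \<bullet> w) *\<^sub>R B - (B \<bullet> B) *\<^sub>R w" by (simp add: Lagrange)
  also have "\<dots> = - w" using wB BB by (simp add: inner_commute)
  finally have "w = 0" by simp
  then have x: "x = (x \<bullet> T) *\<^sub>R T + (x \<bullet> N) *\<^sub>R N + (x \<bullet> B) *\<^sub>R B" unfolding w_def by (simp add: algebra_simps)
  have "x \<bullet> y = ((x \<bullet> T) *\<^sub>R T + (x \<bullet> N) *\<^sub>R N + (x \<bullet> B) *\<^sub>R B) \<bullet> y" using x by simp
  also have "\<dots> = (x \<bullet> T) * (y \<bullet> T) + (x \<bullet> N) * (y \<bullet> N) + (x \<bullet> B) * (y \<bullet> B)"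
    by (simp add: inner_add_left inner_commute[of T y] inner_commute[of N y] inner_commute[of B y])
  finally show ?thesis unfolding B_def .
qed

lemma Cmn_cont: "Cmn m n S F \<Longrightarrow> i \<le> m \<Longrightarrow> j \<le> n \<Longrightarrow>
   continuous_on (S \<times> UNIV) (\<lambda>p. (pdu ^^ j) ((pdt S ^^ i) F) (fst p) (snd p))"
  unfolding Cmn_def by (auto simp: case_prod_beta)

lemma Cmn_du: "Cmn m n S F \<Longrightarrow> i \<le> m \<Longrightarrow> j < n \<Longrightarrow> t \<in> S \<Longrightarrow>
   ((\<lambda>v. (pdu ^^ j) ((pdt S ^^ i) F) t v) has_vector_derivative (pdu ^^ Suc j) ((pdt S ^^ i) F) t u) (at u)"
  unfolding Cmn_def by auto

lemma Cmn_dt: "Cmn m n S F \<Longrightarrow> i < m \<Longrightarrow> t \<in> S \<Longrightarrow>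
   ((\<lambda>s. ((pdt S ^^ i) F) s u) has_vector_derivative (pdt S ^^ Suc i) F t u) (at t within S)"
  unfolding Cmn_def apply (erule allE[of _ i]) apply (erule impE) apply simp apply (erule allE[of _ 0]) by auto

theorem mainTheorem9:
  fixes gam :: "real \<Rightarrow> real \<Rightarrow> real^3"
    and th ups :: "real \<Rightarrow> real \<Rightarrow> real"
    and tb :: real
  assumes tb_pos: "0 < tb"
    and gam_smooth: "smooth_flow {0..<tb} gam"
    and gam_closed: "\<And>t u. t \<in> {0..<tb} \<Longrightarrow> gam t (u + 2*pi) = gam t u"
    and gam_regular: "\<And>t u. t \<in> {0..<tb} \<Longrightarrow> vector_derivative (gam t) (at u) \<noteq> 0"
    and th_reg: "Cmn 1 2 {0..<tb} th"
    and th_closed: "\<And>t u. t \<in> {0..<tb} \<Longrightarrow> \<exists>k::int. th t (u + 2*pi) = th t u + 2*pi*k"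
    and ups_reg: "Cmn 1 1 {0..<tb} ups"
    and ups_closed: "\<And>t u. t \<in> {0..<tb} \<Longrightarrow> ups t (u + 2*pi) = ups t u"
    and kappa_pos: "\<And>t u. t \<in> {0..<tb} \<Longrightarrow> curv (gam t) u > 0"
    and flow_gam: "\<And>t u. t \<in> {0..<tb} \<Longrightarrow>
        ((\<lambda>s. gam s u) has_vector_derivative (curv (gam t) u *\<^sub>R nu_fr (gam t) (th t) u))
          (at t within {0..<tb})"
    and flow_th: "\<And>t u. t \<in> {0..<tb} \<Longrightarrow>
        ((\<lambda>s. th s u) has_real_derivative ups t u) (at t within {0..<tb})"
  shows "\<forall>t\<in>{0..<tb}.
      let R = curve_int (gam t) (\<lambda>u. psi1 (gam t) (th t) u * psi3 (gam t) (th t) u * curv (gam t) u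
                                   + psi2 (gam t) (th t) u * sdr (gam t) (curv (gam t)) u)
      in ((\<lambda>s. curve_int (gam s) (tors (gam s))) has_real_derivative R) (at t within {0..<tb}) \<and>
         ((\<lambda>s. curve_int (gam s) (psi3 (gam s) (th s))) has_real_derivative R) (at t within {0..<tb})"
proof -
  define X where "X j = (pdu ^^ j) gam" for j
  define Y where "Y j = (pdu ^^ j) (pdt {0..<tb} gam)" for j
  have Cg: "Cmn m n {0..<tb} gam" for m n using gam_smooth unfolding smooth_flow_def by blast
  have Xu0: "pd False tb ((pdu ^^ j) gam) ((pdu ^^ Suc j) gam)" for j
  proof (rule pdI)
    show "continuous_on ({0..<tb} \<times> UNIV) (\<lambda>p. (pdu ^^ j) gam (fst p) (snd p))"
      using Cmn_cont[OF Cg[of 0 "Suc j"], of 0 j] by simp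
    show "continuous_on ({0..<tb} \<times> UNIV) (\<lambda>p. (pdu ^^ Suc j) gam (fst p) (snd p))"
      using Cmn_cont[OF Cg[of 0 "Suc j"], of 0 "Suc j"] by simp
    fix t u assume "t \<in> {0..<tb}"
    then show "((\<lambda>v. (pdu ^^ j) gam t v) has_vector_derivative (pdu ^^ Suc j) gam t u) (at u)"
      using Cmn_du[OF Cg[of 0 "Suc j"], of 0 j t u] by simp
  qed simp
  have Xu: "pd False tb (X j) (X (Suc j))" for j using Xu0 unfolding X_def .
  have p1: "(pdt {0..<tb} ^^ Suc 0) gam = pdt {0..<tb} gam" by simp
  have Yu: "pd False tb (Y j) (Y (Suc j))" for j
  proof (rule pdI)
    show "continuous_on ({0..<tb} \<times> UNIV) (\<lambda>p. Y j (fst p) (snd p))"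
      using Cmn_cont[OF Cg[of 1 "Suc j"], of 1 j] by (simp add: Y_def)
    show "continuous_on ({0..<tb} \<times> UNIV) (\<lambda>p. Y (Suc j) (fst p) (snd p))"
      using Cmn_cont[OF Cg[of 1 "Suc j"], of 1 "Suc j"] by (simp add: Y_def p1 del: funpow.simps)
    fix t u assume "t \<in> {0..<tb}"
    then show "((\<lambda>v. Y j t v) has_vector_derivative Y (Suc j) t u) (at u)"
      using Cmn_du[OF Cg[of 1 "Suc j"], of 1 j t u] by (simp add: Y_def p1 del: funpow.simps)
  qed simp
  have X0t: "pd True tb (X 0) (Y 0)"
  proof (rule pdI)
    show "continuous_on ({0..<tb} \<times> UNIV) (\<lambda>p. X 0 (fst p) (snd p))"
      using Cmn_cont[OF Cg[of 0 0], of 0 0] by (simp add: X_def)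
    show "continuous_on ({0..<tb} \<times> UNIV) (\<lambda>p. Y 0 (fst p) (snd p))"
      using Cmn_cont[OF Cg[of 1 0], of 1 0] by (simp add: Y_def)
    fix t u assume "t \<in> {0..<tb}"
    then show "((\<lambda>s. X 0 s u) has_vector_derivative Y 0 t u) (at t within {0..<tb})"
      using Cmn_dt[OF Cg[of 1 0], of 0 t u] by (simp add: X_def Y_def)
  qed simp
  have Xt: "pd True tb (X j) (Y j)" for j
  proof (induction j)
    case 0 show ?case by (rule X0t)
  next
    case (Suc j) show ?case by (rule schwarzA[OF Suc Xu Yu])
  qed
  have Xper: "X j t (u + 2*pi) = X j t u" if t: "t \<in> {0..<tb}" for j t u
  proof (induction j arbitrary: u)
    case 0 show ?case using gam_closed[OF t] by (simp add: X_def)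
  next
    case (Suc j)
    have d1: "((X j t \<circ> (\<lambda>v. v + 2*pi)) has_vector_derivative (1 *\<^sub>R X (Suc j) t (u + 2*pi))) (at u)"
      by (rule vector_diff_chain_at) (auto intro!: derivative_eq_intros pdD(4)[OF Xu _ t, simplified])
    have d2: "(X j t has_vector_derivative X (Suc j) t u) (at u)"
      using pdD(4)[OF Xu _ t] by simp
    show ?case using uniq_u[OF d1 d2] Suc by (simp add: o_def)
  qed
  have gt_gen: "\<exists>D. pd True tb ((pdu ^^ j) gam) D" for j using Xt unfolding X_def by blast
  have gp_gen: "\<forall>t\<in>{0..<tb}. \<forall>j u. (pdu ^^ j) gam t (u + 2*pi) = (pdu ^^ j) gam t u"
    using Xper unfolding X_def by blast
  note GU = good_u[of tb gam, OF Xu0]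
  note GT = good_t[of tb gam, OF gt_gen]
  note GP = good_per[of tb gam, OF gp_gen]
  have vdg: "vector_derivative (gam t) (at u) = X 1 t u" if t: "t \<in> {0..<tb}" for t u
  proof -
    have "((\<lambda>v. X 0 t v) has_vector_derivative X 1 t u) (at u)" using pdD(4)[OF Xu _ t] by simp
    then have "(gam t has_vector_derivative X 1 t u) (at u)" by (simp add: X_def)
    then show ?thesis by (rule vector_derivative_at)
  qed
  have X1nz: "X 1 t u \<noteq> 0" if t: "t \<in> {0..<tb}" for t u using gam_regular[OF t] vdg[OF t] by simp
  define g where "g t u = norm (X 1 t u)" for t u
  have gpos: "g t u > 0" if t: "t \<in> {0..<tb}" for t u using X1nz[OF t] by (simp add: g_def)
  have speed_eq: "speed (gam t) u = g t u" if t: "t \<in> {0..<tb}" for t u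
    by (simp add: speed_def g_def vdg[OF t])
  define T where "T t u = (1 / g t u) *\<^sub>R X 1 t u" for t u
  have tangent_eq: "tangent (gam t) = T t" if t: "t \<in> {0..<tb}" for t
    by (rule ext) (simp add: tangent_def sdv_def speed_eq[OF t] vdg[OF t] T_def)
  have goodX1: "goodV tb gam (X 1)" unfolding X_def by (rule goodR_goodV.gX)
  have goodg: "goodR tb gam g"
  proof -
    have "goodR tb gam (\<lambda>t u. norm (X 1 t u))" by (rule goodR_goodV.rnorm[OF goodX1]) (use X1nz in auto)
    then show ?thesis unfolding g_def[abs_def] .
  qed
  have goodT: "goodV tb gam T"
  proof -
    have "goodR tb gam (\<lambda>t u. 1 / g t u)" by (rule goodR_goodV.rdiv1[OF goodg]) (metis gpos order_less_irrefl)
    then have "goodV tb gam (\<lambda>t u. (1 / g t u) *\<^sub>R X 1 t u)" by (rule goodR_goodV.vscale[OF _ goodX1])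
    then show ?thesis unfolding T_def[abs_def] .
  qed
  obtain Tu where goodTu: "goodV tb gam Tu" and Tu: "pd False tb T Tu" using GU(2)[OF goodT] by blast
  define K where "K t u = (1 / g t u) *\<^sub>R Tu t u" for t u
  have sdvT: "sdv (gam t) (tangent (gam t)) u = K t u" if t: "t \<in> {0..<tb}" for t u
  proof -
    have "(T t has_vector_derivative Tu t u) (at u)" using pdD(4)[OF Tu _ t] by simp
    then have "vector_derivative (T t) (at u) = Tu t u" by (rule vector_derivative_at)
    then show ?thesis by (simp add: sdv_def tangent_eq[OF t] speed_eq[OF t] K_def)
  qed
  define kap where "kap t u = norm (K t u)" for t u
  have curv_eq: "curv (gam t) u = kap t u" if t: "t \<in> {0..<tb}" for t u
    by (simp add: curv_def sdvT[OF t] kap_def)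
  have kpos: "kap t u > 0" if t: "t \<in> {0..<tb}" for t u using kappa_pos[OF t, of u] curv_eq[OF t] by simp
  have goodK: "goodV tb gam K"
  proof -
    have "goodR tb gam (\<lambda>t u. 1 / g t u)" by (rule goodR_goodV.rdiv1[OF goodg]) (metis gpos order_less_irrefl)
    then have "goodV tb gam (\<lambda>t u. (1 / g t u) *\<^sub>R Tu t u)" by (rule goodR_goodV.vscale[OF _ goodTu])
    then show ?thesis unfolding K_def[abs_def] .
  qed
  have goodkap: "goodR tb gam kap"
  proof -
    have "goodR tb gam (\<lambda>t u. norm (K t u))" by (rule goodR_goodV.rnorm[OF goodK]) (use kpos in \<open>force simp: kap_def\<close>)
    then show ?thesis unfolding kap_def[abs_def] .
  qed
  define N where "N t u = (1 / kap t u) *\<^sub>R K t u" for t u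
  have normal_eq: "normal (gam t) = N t" if t: "t \<in> {0..<tb}" for t
    by (rule ext) (simp add: normal_def sdvT[OF t] curv_eq[OF t] N_def)
  have goodN: "goodV tb gam N"
  proof -
    have "goodR tb gam (\<lambda>t u. 1 / kap t u)" by (rule goodR_goodV.rdiv1[OF goodkap]) (metis kpos order_less_irrefl)
    then have "goodV tb gam (\<lambda>t u. (1 / kap t u) *\<^sub>R K t u)" by (rule goodR_goodV.vscale[OF _ goodK])
    then show ?thesis unfolding N_def[abs_def] .
  qed
  obtain Nu where goodNu: "goodV tb gam Nu" and Nu: "pd False tb N Nu" using GU(2)[OF goodN] by blast
  define B where "B t u = cross3 (T t u) (N t u)" for t u
  have binormal_eq: "binormal (gam t) = B t" if t: "t \<in> {0..<tb}" for t
    by (rule ext) (simp add: binormal_def tangent_eq[OF t] normal_eq[OF t] B_def)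
  have goodB: "goodV tb gam B"
  proof -
    have "goodV tb gam (\<lambda>t u. cross3 (T t u) (N t u))" by (rule goodR_goodV.vcross[OF goodT goodN])
    then show ?thesis unfolding B_def[abs_def] .
  qed
  define h where "h t u = Nu t u \<bullet> B t u" for t u
  have goodh: "goodR tb gam h"
  proof -
    have "goodR tb gam (\<lambda>t u. Nu t u \<bullet> B t u)" by (rule goodR_goodV.rinner[OF goodNu goodB])
    then show ?thesis unfolding h_def[abs_def] .
  qed
  have tors_eq: "tors (gam t) u * speed (gam t) u = h t u" if t: "t \<in> {0..<tb}" for t u
  proof -
    have "(N t has_vector_derivative Nu t u) (at u)" using pdD(4)[OF Nu _ t] by simp
    then have "vector_derivative (N t) (at u) = Nu t u" by (rule vector_derivative_at)
    then show ?thesis using gpos[OF t, of u]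
      by (simp add: tors_def sdv_def normal_eq[OF t] binormal_eq[OF t] speed_eq[OF t] h_def)
  qed
  obtain ht where ht: "pd True tb h ht" using GT(1)[OF goodh] by blast
  obtain Nt where Nt: "pd True tb N Nt" using GT(2)[OF goodN] by blast
  obtain Nut where Nut: "pd True tb Nu Nut" using GT(2)[OF goodNu] by blast
  obtain Bt where Bt: "pd True tb B Bt" using GT(2)[OF goodB] by blast
  obtain Bu where Bu: "pd False tb B Bu" using GU(2)[OF goodB] by blast
  obtain Tt where Tt: "pd True tb T Tt" using GT(2)[OF goodT] by blast
  obtain gt where gt: "pd True tb g gt" using GT(1)[OF goodg] by blast
  obtain kapu where kapu: "pd False tb kap kapu" using GU(1)[OF goodkap] by blast
  have NtU: "pd False tb Nt Nut" by (rule schwarzB[OF Nu Nt Nut])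
  have Xg: "X 1 t v = g t v *\<^sub>R T t v" if t: "t \<in> {0..<tb}" for t v
    using gpos[OF t, of v] by (simp add: T_def)
  have TT: "T t v \<bullet> T t v = 1" if t: "t \<in> {0..<tb}" for t v
  proof -
    have "norm (T t v) = 1" using X1nz[OF t, of v] by (simp add: T_def g_def)
    then show ?thesis by (simp add: norm_eq_1)
  qed
  have TuN: "Tu t v = (g t v * kap t v) *\<^sub>R N t v" if t: "t \<in> {0..<tb}" for t v
    using gpos[OF t, of v] kpos[OF t, of v] by (simp add: N_def K_def)
  have NN: "N t v \<bullet> N t v = 1" if t: "t \<in> {0..<tb}" for t v
  proof -
    have "norm (N t v) = 1" using kpos[OF t, of v] by (simp add: N_def kap_def)
    then show ?thesis by (simp add: norm_eq_1)
  qed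
  have dT: "((\<lambda>w. T t w) has_vector_derivative Tu t v) (at v)" if t: "t \<in> {0..<tb}" for t v
    using pdD(4)[OF Tu _ t] by simp
  have dN: "((\<lambda>w. N t w) has_vector_derivative Nu t v) (at v)" if t: "t \<in> {0..<tb}" for t v
    using pdD(4)[OF Nu _ t] by simp
  have dB: "((\<lambda>w. B t w) has_vector_derivative Bu t v) (at v)" if t: "t \<in> {0..<tb}" for t v
    using pdD(4)[OF Bu _ t] by simp
  have TN: "T t v \<bullet> N t v = 0" if t: "t \<in> {0..<tb}" for t v
  proof -
    have "Tu t v \<bullet> T t v + T t v \<bullet> Tu t v = 0"
      by (rule const_u[OF vd_inner[OF dT[OF t] dT[OF t]]]) (rule TT[OF t])
    then have "(g t v * kap t v) * (T t v \<bullet> N t v) = 0" by (simp add: TuN[OF t] inner_commute)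
    then show ?thesis using gpos[OF t, of v] kpos[OF t, of v] by simp
  qed
  have BBf: "B t v \<bullet> B t v = 1" and TB: "T t v \<bullet> B t v = 0" and NB: "N t v \<bullet> B t v = 0"
    if t: "t \<in> {0..<tb}" for t v
    using TT[OF t, of v] NN[OF t, of v] TN[OF t, of v]
    by (simp_all add: B_def dot_cross dot_cross_self inner_commute)
  have Qid: "Nu t u \<bullet> Bt t u - Nt t u \<bullet> Bu t u =
      (psi1 (gam t) (th t) u * psi3 (gam t) (th t) u * curv (gam t) u
        + psi2 (gam t) (th t) u * sdr (gam t) (curv (gam t)) u) * speed (gam t) u"
    if t: "t \<in> {0..<tb}" for t u
  proof -
    have NuN: "Nu t u \<bullet> N t u = 0"
    proof -
      have "Nu t u \<bullet> N t u + N t u \<bullet> Nu t u = 0"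
        by (rule const_u[OF vd_inner[OF dN[OF t] dN[OF t]]]) (rule NN[OF t])
      then show ?thesis by (simp add: inner_commute)
    qed
    have NuT: "Nu t u \<bullet> T t u = - (g t u * kap t u)"
    proof -
      have "Tu t u \<bullet> N t u + T t u \<bullet> Nu t u = 0"
        by (rule const_u[OF vd_inner[OF dT[OF t] dN[OF t]]]) (rule TN[OF t])
      then show ?thesis using NN[OF t, of u] by (simp add: TuN[OF t] inner_commute)
    qed
    have BuB: "Bu t u \<bullet> B t u = 0"
    proof -
      have "Bu t u \<bullet> B t u + B t u \<bullet> Bu t u = 0"
        by (rule const_u[OF vd_inner[OF dB[OF t] dB[OF t]]]) (rule BBf[OF t])
      then show ?thesis by (simp add: inner_commute)
    qed
    have BuT: "Bu t u \<bullet> T t u = 0"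
    proof -
      have "Tu t u \<bullet> B t u + T t u \<bullet> Bu t u = 0"
        by (rule const_u[OF vd_inner[OF dT[OF t] dB[OF t]]]) (rule TB[OF t])
      then show ?thesis using NB[OF t, of u] by (simp add: TuN[OF t] inner_commute)
    qed
    have dNt: "((\<lambda>s. N s u) has_vector_derivative Nt t u) (at t within {0..<tb})" using pdD(3)[OF Nt TrueI t] by simp
    have dBt: "((\<lambda>s. B s u) has_vector_derivative Bt t u) (at t within {0..<tb})" using pdD(3)[OF Bt TrueI t] by simp
    have dTt: "((\<lambda>s. T s u) has_vector_derivative Tt t u) (at t within {0..<tb})" using pdD(3)[OF Tt TrueI t] by simp
    have NtN: "Nt t u \<bullet> N t u = 0"
    proof -
      have "Nt t u \<bullet> N t u + N t u \<bullet> Nt t u = 0"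
        by (rule const_t[OF t vd_inner[OF dNt dNt]]) (rule NN)
      then show ?thesis by (simp add: inner_commute)
    qed
    have BtB: "Bt t u \<bullet> B t u = 0"
    proof -
      have "Bt t u \<bullet> B t u + B t u \<bullet> Bt t u = 0"
        by (rule const_t[OF t vd_inner[OF dBt dBt]]) (rule BBf)
      then show ?thesis by (simp add: inner_commute)
    qed
    have TBt: "Tt t u \<bullet> B t u + T t u \<bullet> Bt t u = 0"
      by (rule const_t[OF t vd_inner[OF dTt dBt]]) (rule TB)
    have o1: "Nu t u \<bullet> Bt t u = (Nu t u \<bullet> T t u) * (Bt t u \<bullet> T t u) + (Nu t u \<bullet> N t u) * (Bt t u \<bullet> N t u) + (Nu t u \<bullet> B t u) * (Bt t u \<bullet> B t u)"
      using onb3[OF TT[OF t, of u] NN[OF t, of u] TN[OF t, of u], of "Nu t u" "Bt t u"] by (simp add: B_def)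
    have o2: "Nt t u \<bullet> Bu t u = (Nt t u \<bullet> T t u) * (Bu t u \<bullet> T t u) + (Nt t u \<bullet> N t u) * (Bu t u \<bullet> N t u) + (Nt t u \<bullet> B t u) * (Bu t u \<bullet> B t u)"
      using onb3[OF TT[OF t, of u] NN[OF t, of u] TN[OF t, of u], of "Nt t u" "Bu t u"] by (simp add: B_def)
    have BtT: "Bt t u \<bullet> T t u = - (Tt t u \<bullet> B t u)" using TBt by (simp add: inner_commute)
    have P1: "Nu t u \<bullet> Bt t u = (g t u * kap t u) * (Tt t u \<bullet> B t u)"
      using o1 NuT NuN BtB BtT by simp
    have P2: "Nt t u \<bullet> Bu t u = 0"
      using o2 NtN BuT BuB by simp
    have gnz: "g t u \<noteq> 0" using gpos[OF t, of u] by simp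
    have dT2: "((\<lambda>s. (1 / g s u) *\<^sub>R X 1 s u) has_vector_derivative
        ((- (gt t u / (g t u)^2)) *\<^sub>R X 1 t u + (1 / g t u) *\<^sub>R Y 1 t u)) (at t within {0..<tb})"
      by (rule vd_scaleR[OF vd_div1[OF pdD(3)[OF gt TrueI t] gnz] pdD(3)[OF Xt TrueI t]])
    have Ttv: "Tt t u = (- (gt t u / (g t u)^2)) *\<^sub>R X 1 t u + (1 / g t u) *\<^sub>R Y 1 t u"
      by (rule uniq_t[OF t dTt dT2]) (simp add: T_def)
    have TtB: "Tt t u \<bullet> B t u = (Y 1 t u \<bullet> B t u) / g t u"
      using TB[OF t, of u] Xg[OF t, of u] gnz by (simp add: Ttv inner_add_left inner_diff_left)
    have Y0v: "Y 0 t v = kap t v *\<^sub>R (cos (th t v) *\<^sub>R N t v + sin (th t v) *\<^sub>R B t v)" for v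
    proof -
      have "Y 0 t v = curv (gam t) v *\<^sub>R nu_fr (gam t) (th t) v"
        by (rule uniq_t[OF t pdD(3)[OF X0t TrueI t] flow_gam[OF t, of v]]) (simp_all add: X_def)
      then show ?thesis by (simp add: curv_eq[OF t] nu_fr_def normal_eq[OF t] binormal_eq[OF t])
    qed
    have dth: "((\<lambda>v. th t v) has_vector_derivative pdu th t u) (at u)"
      using Cmn_du[OF th_reg, of 0 0 t u] t by simp
    have dkap: "((\<lambda>v. kap t v) has_vector_derivative kapu t u) (at u)"
      using pdD(4)[OF kapu _ t] by simp
    have dY: "((\<lambda>v. Y 0 t v) has_vector_derivative Y 1 t u) (at u)" using pdD(4)[OF Yu _ t] by simp
    have dY2: "((\<lambda>v. kap t v *\<^sub>R (cos (th t v) *\<^sub>R N t v + sin (th t v) *\<^sub>R B t v)) has_vector_derivative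
       (kapu t u *\<^sub>R (cos (th t u) *\<^sub>R N t u + sin (th t u) *\<^sub>R B t u) + kap t u *\<^sub>R
         (((- (sin (th t u) * pdu th t u)) *\<^sub>R N t u + cos (th t u) *\<^sub>R Nu t u)
        + ((cos (th t u) * pdu th t u) *\<^sub>R B t u + sin (th t u) *\<^sub>R Bu t u)))) (at u)"
      by (intro vd_scaleR dkap has_vector_derivative_add vd_cos vd_sin dth dN[OF t] dB[OF t])
    have Y1v: "Y 1 t u = kapu t u *\<^sub>R (cos (th t u) *\<^sub>R N t u + sin (th t u) *\<^sub>R B t u) + kap t u *\<^sub>R
         (((- (sin (th t u) * pdu th t u)) *\<^sub>R N t u + cos (th t u) *\<^sub>R Nu t u)
        + ((cos (th t u) * pdu th t u) *\<^sub>R B t u + sin (th t u) *\<^sub>R Bu t u))"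
      by (rule uniq_u[OF dY dY2]) (rule Y0v)
    have Y1B: "Y 1 t u \<bullet> B t u = kapu t u * sin (th t u) + kap t u * (cos (th t u) * h t u + cos (th t u) * pdu th t u)"
      unfolding Y1v using NB[OF t, of u] BBf[OF t, of u] BuB by (simp add: inner_add_left h_def algebra_simps)
    have Q: "Nu t u \<bullet> Bt t u - Nt t u \<bullet> Bu t u = kap t u * (kapu t u * sin (th t u) + kap t u * (cos (th t u) * h t u + cos (th t u) * pdu th t u))"
      unfolding P1 P2 TtB Y1B using gnz by simp
    have curvf: "curv (gam t) = kap t" by (rule ext) (rule curv_eq[OF t])
    have dk: "deriv (curv (gam t)) u = kapu t u"
      unfolding curvf using dkap by (intro DERIV_imp_deriv) (simp add: has_real_derivative_iff_has_vector_derivative)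
    have dthd: "deriv (th t) u = pdu th t u"
      using dth by (intro DERIV_imp_deriv) (simp add: has_real_derivative_iff_has_vector_derivative)
    have tv: "tors (gam t) u = h t u / g t u" using tors_eq[OF t, of u] speed_eq[OF t, of u] gnz
      by (simp add: field_simps)
    show ?thesis unfolding Q using gnz
      by (simp add: psi1_def psi2_def psi3_def sdr_def dk dthd tv curv_eq[OF t] speed_eq[OF t] field_simps)
  qed
  have Dint: "((\<lambda>s. integral {0..2*pi} (h s)) has_vector_derivative integral {0..2*pi} (ht t)) (at t within {0..<tb})"
    if t: "t \<in> {0..<tb}" for t
  proof -
    have "((\<lambda>s. integral (cbox 0 (2*pi)) (\<lambda>u. h s u)) has_vector_derivative integral (cbox 0 (2*pi)) (\<lambda>u. ht t u)) (at t within {0..<tb})"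
    proof (rule leibniz_rule_vector_derivative[where f="\<lambda>s u. h s u" and fx="\<lambda>s u. ht s u" and U="{0..<tb}"])
      fix s u assume "s \<in> {0..<tb}"
      then show "((\<lambda>s. h s u) has_vector_derivative ht s u) (at s within {0..<tb})" using pdD(3)[OF ht TrueI] by blast
    next
      fix s assume s: "s \<in> {0..<tb}"
      have "continuous_on {0..2*pi} (\<lambda>u. h s u)" by (rule cont_slice_u[OF pdD(1)[OF ht] s])
      then show "(\<lambda>u. h s u) integrable_on cbox 0 (2*pi)" by (simp add: integrable_continuous_interval)
    next
      show "continuous_on ({0..<tb} \<times> cbox 0 (2*pi)) (\<lambda>(s, u). ht s u)"
        using continuous_on_subset[OF pdD(2)[OF ht], of "{0..<tb} \<times> cbox 0 (2*pi)"] by (auto simp: case_prod_beta)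
    qed (use t in auto)
    then show ?thesis by (simp add: cbox_interval)
  qed
  have Iht: "integral {0..2*pi} (ht t) = curve_int (gam t) (\<lambda>u. psi1 (gam t) (th t) u * psi3 (gam t) (th t) u * curv (gam t) u
                                   + psi2 (gam t) (th t) u * sdr (gam t) (curv (gam t)) u)"
    if t: "t \<in> {0..<tb}" for t
  proof -
    have htv: "ht t u = (Nut t u \<bullet> B t u + Nt t u \<bullet> Bu t u) + (Nu t u \<bullet> Bt t u - Nt t u \<bullet> Bu t u)" for u
    proof -
      have "ht t u = Nut t u \<bullet> B t u + Nu t u \<bullet> Bt t u"
        by (rule uniq_t[OF t pdD(3)[OF ht TrueI t] vd_inner[OF pdD(3)[OF Nut TrueI t] pdD(3)[OF Bt TrueI t]]]) (simp add: h_def)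
      then show ?thesis by simp
    qed
    have Pd: "((\<lambda>v. Nt t v \<bullet> B t v) has_vector_derivative (Nut t x \<bullet> B t x + Nt t x \<bullet> Bu t x)) (at x within {0..2*pi})" for x
      by (rule has_vector_derivative_at_within) (rule vd_inner[OF pdD(4)[OF NtU _ t] pdD(4)[OF Bu _ t], simplified])
    have FT: "((\<lambda>u. Nut t u \<bullet> B t u + Nt t u \<bullet> Bu t u) has_integral (Nt t (2*pi) \<bullet> B t (2*pi) - Nt t 0 \<bullet> B t 0)) {0..2*pi}"
      using fundamental_theorem_of_calculus[of 0 "2*pi" "\<lambda>v. Nt t v \<bullet> B t v" "\<lambda>u. Nut t u \<bullet> B t u + Nt t u \<bullet> Bu t u"] Pd
      by simp
    have perN: "Nt t (2*pi) = Nt t 0"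
    proof (rule uniq_t[OF t pdD(3)[OF Nt TrueI t] pdD(3)[OF Nt TrueI t]])
      fix s assume s: "s \<in> {0..<tb}"
      show "N s (2*pi) = N s 0" using GP(2)[OF goodN s, of 0] by simp
    qed
    have perB: "B t (2*pi) = B t 0" using GP(2)[OF goodB t, of 0] by simp
    have FT0: "((\<lambda>u. Nut t u \<bullet> B t u + Nt t u \<bullet> Bu t u) has_integral 0) {0..2*pi}"
      using FT perN perB by simp
    have "continuous_on {0..2*pi} (\<lambda>u. ht t u)" by (rule cont_slice_u[OF pdD(2)[OF ht] t])
    then have "(\<lambda>u. ht t u) integrable_on {0..2*pi}" by (simp add: integrable_continuous_interval)
    then have "((\<lambda>u. ht t u - (Nut t u \<bullet> B t u + Nt t u \<bullet> Bu t u)) has_integral (integral {0..2*pi} (\<lambda>u. ht t u) - 0)) {0..2*pi}"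
      by (intro has_integral_diff FT0) (simp add: integrable_integral)
    moreover have "(\<lambda>u. ht t u - (Nut t u \<bullet> B t u + Nt t u \<bullet> Bu t u)) = (\<lambda>u. (psi1 (gam t) (th t) u * psi3 (gam t) (th t) u * curv (gam t) u
                                   + psi2 (gam t) (th t) u * sdr (gam t) (curv (gam t)) u) * speed (gam t) u)"
      by (rule ext) (simp add: htv Qid[OF t])
    ultimately show ?thesis unfolding curve_int_def by (simp add: integral_unique)
  qed
  have torsint: "curve_int (gam t) (tors (gam t)) = integral {0..2*pi} (h t)" if t: "t \<in> {0..<tb}" for t
    unfolding curve_int_def using tors_eq[OF t] by simp
  have psi3int: "curve_int (gam t) (psi3 (gam t) (th t)) = integral {0..2*pi} (h t) + (th t (2*pi) - th t 0)"
    if t: "t \<in> {0..<tb}" for t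
  proof -
    have dth: "((\<lambda>v. th t v) has_vector_derivative pdu th t x) (at x within {0..2*pi})" for x
      using Cmn_du[OF th_reg, of 0 0 t x] t by (simp add: has_vector_derivative_at_within)
    have dthd: "deriv (th t) x = pdu th t x" for x
      using Cmn_du[OF th_reg, of 0 0 t x] t
      by (intro DERIV_imp_deriv) (simp add: has_real_derivative_iff_has_vector_derivative)
    have F1: "((\<lambda>u. pdu th t u) has_integral (th t (2*pi) - th t 0)) {0..2*pi}"
      using fundamental_theorem_of_calculus[of 0 "2*pi" "\<lambda>v. th t v" "\<lambda>u. pdu th t u"] dth by simp
    have "continuous_on {0..2*pi} (\<lambda>u. h t u)" by (rule cont_slice_u[OF pdD(1)[OF ht] t])
    then have "(\<lambda>u. h t u) integrable_on {0..2*pi}" by (simp add: integrable_continuous_interval)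
    then have F2: "((\<lambda>u. h t u + pdu th t u) has_integral (integral {0..2*pi} (\<lambda>u. h t u) + (th t (2*pi) - th t 0))) {0..2*pi}"
      by (intro has_integral_add F1) (simp add: integrable_integral)
    have "(\<lambda>u. psi3 (gam t) (th t) u * speed (gam t) u) = (\<lambda>u. h t u + pdu th t u)"
    proof (rule ext)
      fix u
      have gnz: "g t u \<noteq> 0" using gpos[OF t, of u] by simp
      show "psi3 (gam t) (th t) u * speed (gam t) u = h t u + pdu th t u"
        using tors_eq[OF t, of u] gnz by (simp add: psi3_def sdr_def dthd speed_eq[OF t] distrib_right)
    qed
    then show ?thesis unfolding curve_int_def using F2 by (simp add: integral_unique)
  qed
  show ?thesis
  proof (intro ballI, unfold Let_def, intro conjI)
    fix t assume t: "t \<in> {0..<tb}"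
    have D1: "((\<lambda>s. integral {0..2*pi} (h s)) has_vector_derivative curve_int (gam t) (\<lambda>u. psi1 (gam t) (th t) u * psi3 (gam t) (th t) u * curv (gam t) u
                                   + psi2 (gam t) (th t) u * sdr (gam t) (curv (gam t)) u)) (at t within {0..<tb})"
      using Dint[OF t] Iht[OF t] by simp
    show "((\<lambda>s. curve_int (gam s) (tors (gam s))) has_real_derivative curve_int (gam t) (\<lambda>u. psi1 (gam t) (th t) u * psi3 (gam t) (th t) u * curv (gam t) u
                                   + psi2 (gam t) (th t) u * sdr (gam t) (curv (gam t)) u)) (at t within {0..<tb})"
      unfolding has_real_derivative_iff_has_vector_derivative
      by (rule has_vector_derivative_transform_within[OF D1, where d=1]) (use t torsint in auto)
    define phi where "phi s = th s (2*pi) - th s 0" for s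
    have cphi: "continuous_on {0..<tb} phi"
    proof -
      have c: "continuous_on ({0..<tb} \<times> UNIV) (\<lambda>p. th (fst p) (snd p))"
        using Cmn_cont[OF th_reg, of 0 0] by simp
      show ?thesis unfolding phi_def
        by (intro continuous_on_diff cont_slice_t[OF c]) auto
    qed
    obtain d where d: "d > 0" "\<And>s. s \<in> {0..<tb} \<Longrightarrow> dist s t < d \<Longrightarrow> dist (phi s) (phi t) < 2*pi"
      using cphi t unfolding continuous_on_iff by (metis pi_gt_zero mult_pos_pos zero_less_numeral)
    have phic: "phi s = phi t" if s: "s \<in> {0..<tb}" "dist s t < d" for s
    proof -
      obtain k1 :: int where k1: "th s (0 + 2*pi) = th s 0 + 2*pi*k1" using th_closed[OF s(1)] by blast
      obtain k2 :: int where k2: "th t (0 + 2*pi) = th t 0 + 2*pi*k2" using th_closed[OF t] by blast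
      have "phi s - phi t = 2*pi*(k1 - k2)" using k1 k2 by (simp add: phi_def algebra_simps)
      moreover have "\<bar>phi s - phi t\<bar> < 2*pi" using d(2)[OF s] by (simp add: dist_real_def)
      ultimately have "\<bar>real_of_int (k1 - k2)\<bar> < 1" using pi_gt_zero by (simp add: abs_mult)
      then have "k1 = k2" by linarith
      then show ?thesis using \<open>phi s - phi t = 2*pi*(k1 - k2)\<close> by simp
    qed
    have D2: "((\<lambda>s. integral {0..2*pi} (h s) + phi t) has_vector_derivative curve_int (gam t) (\<lambda>u. psi1 (gam t) (th t) u * psi3 (gam t) (th t) u * curv (gam t) u
                                   + psi2 (gam t) (th t) u * sdr (gam t) (curv (gam t)) u)) (at t within {0..<tb})"
      using has_vector_derivative_add[OF D1 has_vector_derivative_const[of "phi t"]] by simp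
    show "((\<lambda>s. curve_int (gam s) (psi3 (gam s) (th s))) has_real_derivative curve_int (gam t) (\<lambda>u. psi1 (gam t) (th t) u * psi3 (gam t) (th t) u * curv (gam t) u
                                   + psi2 (gam t) (th t) u * sdr (gam t) (curv (gam t)) u)) (at t within {0..<tb})"
      unfolding has_real_derivative_iff_has_vector_derivative
    proof (rule has_vector_derivative_transform_within[OF D2 d(1) t])
      fix s assume s: "s \<in> {0..<tb}" "dist s t < d"
      show "integral {0..2*pi} (h s) + phi t = curve_int (gam s) (psi3 (gam s) (th s))"
        using psi3int[OF s(1)] phic[OF s] by (simp add: phi_def)
    qed
  qed
qed

end
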